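(* Let $\bar u=(u_\beta)_{\beta<\alpha}$ be a densely non-increasing sequence of elements of a linear order $(U,<)$. If the range $\{u_\beta\mid\beta<\alpha\}$ of $\bar u$ is finite, then $\bar u$ is non-increasing.
   Context: A sequence $(u_\beta)_{\beta<\alpha}$ indexed by a countable ordinal is non-increasing if $\beta<\beta'<\alpha$ implies $u_\beta\ge u_{\beta'}$. It is densely non-increasing if for all $\gamma<\gamma'\le\alpha$, either $u_\beta=u_\gamma$ for all $\gamma\le\beta<\gamma'$, or there exist $\gamma\le\beta<\beta'<\gamma'$ with $u_\beta>u_{\beta'}$. *)

theory Defs
  imports Main "HOL-Library.Countable_Set"
begin

text \<open>An ordinal alpha is represented as an element of a well-ordered type;
  the sequence is indexed by the initial segment {..<alpha}.\<close>

definition non_increasing :: "'a::wellorder \<Rightarrow> ('a \<Rightarrow> 'u::linorder) \<Rightarrow> bool" where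
  "non_increasing \<alpha> u \<longleftrightarrow> (\<forall>\<beta> \<beta>'. \<beta> < \<beta>' \<and> \<beta>' < \<alpha> \<longrightarrow> u \<beta> \<ge> u \<beta>')"

definition densely_non_increasing :: "'a::wellorder \<Rightarrow> ('a \<Rightarrow> 'u::linorder) \<Rightarrow> bool" where
  "densely_non_increasing \<alpha> u \<longleftrightarrow>
     (\<forall>\<gamma> \<gamma>'. \<gamma> < \<gamma>' \<and> \<gamma>' \<le> \<alpha> \<longrightarrow>
        ((\<forall>\<beta>. \<gamma> \<le> \<beta> \<and> \<beta> < \<gamma>' \<longrightarrow> u \<beta> = u \<gamma>) \<or>
         (\<exists>\<beta> \<beta>'. \<gamma> \<le> \<beta> \<and> \<beta> < \<beta>' \<and> \<beta>' < \<gamma>' \<and> u \<beta> > u \<beta>')))"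

end

theory Submission
  imports Defs
begin

theorem mainTheorem13:
  fixes \<alpha> :: "'a::wellorder" and u :: "'a \<Rightarrow> 'u::linorder"
  assumes "countable {..<\<alpha>}"
    and "densely_non_increasing \<alpha> u"
    and "finite (u ` {..<\<alpha>})"
  shows "non_increasing \<alpha> u"
proof (rule ccontr)
  assume "\<not> non_increasing \<alpha> u"
  then obtain b0 a0 where ab0: "a0 < b0" "b0 < \<alpha>" "u a0 < u b0"
    unfolding non_increasing_def by (auto simp: not_le)
  define P where "P b \<longleftrightarrow> b < \<alpha> \<and> (\<exists>a<b. u a < u b)" for b
  have Pb0: "P b0" using ab0 P_def by auto
  define b where "b = (LEAST x. P x)"
  have Pb: "P b" using Pb0 b_def by (metis LeastI)
  have minb: "\<And>y. y < b \<Longrightarrow> \<not> P y" using b_def not_less_Least by blast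
  have blt: "b < \<alpha>" using Pb P_def by auto
  obtain a where a: "a < b" "u a < u b" using Pb P_def by auto
  have ni: "u y \<le> u x" if "x < y" "y < b" for x y
  proof (rule ccontr)
    assume "\<not> u y \<le> u x"
    then have "P y" using that blt unfolding P_def by (auto simp: not_le)
    then show False using minb that by blast
  qed
  define S where "S = u ` {a..<b}"
  have finS: "finite S" unfolding S_def
    by (rule finite_subset[OF _ assms(3)]) (use blt in auto)
  have neS: "S \<noteq> {}" unfolding S_def using a by auto
  obtain d where d: "d \<in> {a..<b}" "u d = Min S"
    using Min_in[OF finS neS] unfolding S_def by auto
  have const: "u x = u d" if "d \<le> x" "x < b" for x
  proof -
    have "x \<in> {a..<b}" using that d by auto
    then have "u x \<ge> Min S" using finS S_def by auto
    moreover have "u x \<le> u d" using ni[of d x] that by (cases "d = x") auto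
    ultimately show ?thesis using d by auto
  qed
  have ud: "u d < u b"
  proof -
    have "u d \<le> u a" using d finS S_def a by auto
    then show ?thesis using a by auto
  qed
  define g where "g = (LEAST x. b < x)"
  have "b < g" and gle: "g \<le> \<alpha>" using blt unfolding g_def
    by (auto intro: LeastI Least_le)
  have below: "x \<le> b" if "x < g" for x
  proof (rule ccontr)
    assume "\<not> x \<le> b"
    then have "b < x" by auto
    then have "g \<le> x" unfolding g_def by (rule Least_le)
    then show False using that by auto
  qed
  have dg: "d < g" using d \<open>b < g\<close> by auto
  from assms(2) dg gle have
    "(\<forall>\<beta>. d \<le> \<beta> \<and> \<beta> < g \<longrightarrow> u \<beta> = u d) \<or>
     (\<exists>\<beta> \<beta>'. d \<le> \<beta> \<and> \<beta> < \<beta>' \<and> \<beta>' < g \<and> u \<beta> > u \<beta>')"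
    unfolding densely_non_increasing_def by blast
  then show False
  proof
    assume "\<forall>\<beta>. d \<le> \<beta> \<and> \<beta> < g \<longrightarrow> u \<beta> = u d"
    then have "u b = u d" using d \<open>b < g\<close> by auto
    then show False using ud by auto
  next
    assume "\<exists>\<beta> \<beta>'. d \<le> \<beta> \<and> \<beta> < \<beta>' \<and> \<beta>' < g \<and> u \<beta> > u \<beta>'"
    then obtain x y where xy: "d \<le> x" "x < y" "y < g" "u x > u y" by blast
    have "y \<le> b" using below xy by auto
    then have xb: "x < b" using xy by auto
    show False
    proof (cases "y = b")
      case True then show False using const[OF xy(1) xb] ud xy by auto
    next
      case False
      then have "y < b" using \<open>y \<le> b\<close> by auto
      then show False using const[OF xy(1) xb] const[of y] xy by auto
    qed
  qed
qed

end
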